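(* Let $(\Omega,\mathbb{F},\mathbb{P})$ be a probability space, let $J\in\mathbb{N}$ and $S=\{0,1,\ldots,J\}$. For each $j,k\in S$, $k\neq j$, let $(\mu_{jk}(t))_{t\geq 0}$ be a stochastic process with values in $[0,\infty)$, continuous sample paths and $\mathbb{E}[\mu_{jk}(t)]<\infty$ for all $t$. Let $X=(X_t)_{t\geq 0}$ be a jump process with values in $S$ and deterministic initial state $x_0\in S$, constructed canonically (via the Ionescu-Tulcea theorem) so that, conditionally on $\mu=(\mu_{jk})_{j\neq k}$, $X$ is a Markov jump process with transition intensities $\mu$; in particular, for every $t$, $\mathbb{F}^X_{t+} \perp\!\!\!\perp \mathbb{F}^X_t \mid \sigma(X_t)\vee\mathbb{F}^\mu_\infty$, and there exist conditional transition probabilities $P^\mu_{jk}(t,T)$, depending on $\mu$ only through $(\mu(s))_{t\le s\le T}$, with $\mathbb{P}(X_T=k\mid \mathbb{F}^X_t\vee\mathbb{F}^\mu_\infty)=P^\mu_{X_t k}(t,T)$ for $0\le t<T$ and $\lim_{h\searrow 0}h^{-1}P^\mu_{jk}(t,t+h)=\mu_{jk}(t)$. Then for every $t\in[0,\infty)$, $$\mathbb{F}^{X,\mu}_{t+} \perp\!\!\!\perp \mathbb{F}^X_t \mid \sigma(X_t)\vee\mathbb{F}^\mu_t, \qquad \mathbb{F}^{\mu}_{t+} \perp\!\!\!\perp \mathbb{F}^X_t \mid \mathbb{F}^\mu_t.$$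
   Context: For a process $Z$, $\mathbb{F}^Z_t=\sigma(Z_s: s\le t)$, $\mathbb{F}^Z_\infty=\sigma(\bigcup_{t\ge0}\mathbb{F}^Z_t)$, and $\mathbb{F}^Z_{t+}=\sigma(Z_s: s>t)$ (the future information after time $t$). $\mathbb{F}^{X,\mu}$ denotes the corresponding filtrations generated jointly by $(X,\mu)$. $\mathcal{A}\vee\mathcal{B}$ is the smallest $\sigma$-algebra containing $\mathcal{A}$ and $\mathcal{B}$, and $\perp\!\!\!\perp \cdot\mid\cdot$ denotes conditional independence of $\sigma$-algebras. By the canonical construction, the conditional distribution of $(X_s)_{s\le t}$ given $\mathbb{F}^\mu_\infty$ depends on $\mu$ only through $(\mu(s))_{s\le t}$ (i.e. is $\mathbb{F}^\mu_t$-measurable). All identities hold $\mathbb{P}$-almost surely. *)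

theory Defs
  imports "HOL-Probability.Probability"
begin

definition sig :: "'a measure \<Rightarrow> 'a set set \<Rightarrow> 'a measure" where
  "sig M E = sigma (space M) E"

definition genX :: "'a measure \<Rightarrow> (real \<Rightarrow> 'a \<Rightarrow> nat) \<Rightarrow> real set \<Rightarrow> 'a set set" where
  "genX M X T = (\<Union>s\<in>T. {X s -` B \<inter> space M | B. B \<subseteq> (UNIV :: nat set)})"

definition genMu :: "'a measure \<Rightarrow> nat \<Rightarrow> (nat \<Rightarrow> nat \<Rightarrow> real \<Rightarrow> 'a \<Rightarrow> real) \<Rightarrow> real set \<Rightarrow> 'a set set" where
  "genMu M J mu T = (\<Union>s\<in>T. \<Union>j\<in>{0..J}. \<Union>k\<in>{0..J} - {j}.
      {mu j k s -` B \<inter> space M | B. B \<in> sets borel})"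

definition cond_indep :: "'a measure \<Rightarrow> 'a measure \<Rightarrow> 'a measure \<Rightarrow> 'a measure \<Rightarrow> bool" where
  "cond_indep M A B G \<longleftrightarrow>
     (\<forall>a\<in>sets A. \<forall>b\<in>sets B. AE \<omega> in M.
        real_cond_exp M G (indicator (a \<inter> b)) \<omega> =
        real_cond_exp M G (indicator a) \<omega> * real_cond_exp M G (indicator b) \<omega>)"

end

theory Submission
  imports Defs
begin

lemma subalg_sig:
  assumes "E \<subseteq> sets M" shows "subalgebra M (sig M E)"
proof -
  have "E \<subseteq> Pow (space M)" using assms sets.sets_into_space by blast
  then show ?thesis unfolding subalgebra_def sig_def
    by (simp add: sets_measure_of space_measure_of_conv sets.sigma_sets_subset assms)
qed

lemma sets_sig:
  assumes "E \<subseteq> sets M" shows "sets (sig M E) = sigma_sets (space M) E"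
proof -
  have "E \<subseteq> Pow (space M)" using assms sets.sets_into_space by blast
  then show ?thesis unfolding sig_def by (simp add: sets_measure_of)
qed

lemma space_sig[simp]: "space (sig M E) = space M"
  unfolding sig_def by (simp add: space_measure_of_conv)

lemma sig_mono:
  assumes "E2 \<subseteq> sets M" "E1 \<subseteq> E2" shows "sets (sig M E1) \<subseteq> sets (sig M E2)"
  using assms sets_sig[of E2 M] sets_sig[of E1 M]
  by (metis order_trans sigma_sets_mono')

lemma subalg_sub:
  assumes "E2 \<subseteq> sets M" "E1 \<subseteq> E2" shows "subalgebra (sig M E2) (sig M E1)"
  using sig_mono[OF assms] unfolding subalgebra_def by simp

lemma sfs:
  assumes "prob_space M" "subalgebra M F" shows "sigma_finite_subalgebra M F"
proof -
  interpret prob_space M by fact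
  have "finite_measure_subalgebra M F" by standard (rule assms(2))
  then show ?thesis by (rule finite_measure_subalgebra_is_sigma_finite)
qed

lemma dynkin_int:
  fixes f g :: "'a \<Rightarrow> real"
  assumes f: "integrable M f" and g: "integrable M g" and st: "Int_stable E" and E: "E \<subseteq> sets M"
    and tot: "(\<integral>x. f x \<partial>M) = (\<integral>x. g x \<partial>M)"
    and bas: "\<And>c. c \<in> E \<Longrightarrow> (\<integral>x\<in>c. f x \<partial>M) = (\<integral>x\<in>c. g x \<partial>M)"
    and c: "c \<in> sigma_sets (space M) E"
  shows "(\<integral>x\<in>c. f x \<partial>M) = (\<integral>x\<in>c. g x \<partial>M)"
proof -
  have EP: "E \<subseteq> Pow (space M)" using E sets.sets_into_space by blast
  have ss: "sigma_sets (space M) E \<subseteq> sets M" by (rule sets.sigma_sets_subset[OF E])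
  define h where "h x = f x - g x" for x
  have h: "integrable M h" unfolding h_def using f g by auto
  have eq: "(\<integral>x\<in>c. f x \<partial>M) = (\<integral>x\<in>c. g x \<partial>M) \<longleftrightarrow> (\<integral>x\<in>c. h x \<partial>M) = 0" if "c \<in> sets M" for c
  proof -
    have "(\<integral>x\<in>c. h x \<partial>M) = (\<integral>x\<in>c. f x \<partial>M) - (\<integral>x\<in>c. g x \<partial>M)"
      unfolding h_def set_lebesgue_integral_def
      using integrable_mult_indicator[OF that f] integrable_mult_indicator[OF that g]
      by (simp add: right_diff_distrib)
    then show ?thesis by simp
  qed
  have "(\<integral>x\<in>c. h x \<partial>M) = 0" using st EP c
  proof (induction rule: sigma_sets_induct_disjoint)
    case (basic A) then show ?case using eq bas E by auto
  next
    case empty then show ?case by (simp add: set_lebesgue_integral_def)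
  next
    case (compl A)
    have A: "A \<in> sets M" using compl ss by auto
    have "(\<integral>x\<in>space M - A. h x \<partial>M) = (\<integral>x. h x - indicator A x * h x \<partial>M)"
      unfolding set_lebesgue_integral_def
      by (rule Bochner_Integration.integral_cong) (auto split: split_indicator)
    also have "\<dots> = (\<integral>x. h x \<partial>M) - (\<integral>x\<in>A. h x \<partial>M)"
      unfolding set_lebesgue_integral_def
      using integrable_mult_indicator[OF A h] h by simp
    also have "(\<integral>x. h x \<partial>M) = 0" unfolding h_def using f g tot by simp
    finally show ?case using compl by simp
  next
    case (union A)
    have A: "\<And>i. A i \<in> sets M" using union ss by auto
    have "(\<integral>x\<in>(\<Union>i. A i). h x \<partial>M) = (\<Sum>i. (\<integral>x\<in>A i. h x \<partial>M))"
    proof (rule lebesgue_integral_countable_add)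
      show "\<And>i j. i \<noteq> j \<Longrightarrow> A i \<inter> A j = {}" using union(1) unfolding disjoint_family_on_def by auto
      show "set_integrable M (\<Union>i. A i) h" unfolding set_integrable_def
        using integrable_mult_indicator[OF _ h, of "\<Union>i. A i"] A by auto
    qed (use A in auto)
    then show ?case using union by simp
  qed
  then show ?thesis using eq ss c by auto
qed


lemma L1:
  assumes prob: "prob_space M"
    and sA: "subalgebra Q A" and sG: "subalgebra Q G" and sQ: "subalgebra M Q"
    and sB: "subalgebra M B"
    and key: "\<And>b. b \<in> sets B \<Longrightarrow> AE x in M. real_cond_exp M Q (indicator b) x = real_cond_exp M G (indicator b) x"
  shows "cond_indep M A B G"
  unfolding cond_indep_def
proof (intro ballI)
  fix a b assume a: "a \<in> sets A" and b: "b \<in> sets B"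
  have sMG: "subalgebra M G" using sG sQ unfolding subalgebra_def by auto
  interpret G: sigma_finite_subalgebra M G by (rule sfs[OF prob sMG])
  interpret Q: sigma_finite_subalgebra M Q by (rule sfs[OF prob sQ])
  interpret prob_space M by fact
  have aQ: "a \<in> sets Q" using a sA unfolding subalgebra_def by auto
  have aM: "a \<in> sets M" using aQ sQ unfolding subalgebra_def by auto
  have bM: "b \<in> sets M" using b sB unfolding subalgebra_def by auto
  have [measurable]: "indicator a \<in> borel_measurable Q" "indicator a \<in> borel_measurable M"
     "indicator b \<in> borel_measurable M" using aQ aM bM by auto
  have ib: "integrable M (indicator b :: _ \<Rightarrow> real)" using bM by (simp add: integrable_indicator_iff emeasure_eq_measure)
  have ia: "integrable M (indicator a :: _ \<Rightarrow> real)" using aM by (simp add: integrable_indicator_iff emeasure_eq_measure)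
  have iab: "integrable M (\<lambda>x. indicator a x * indicator b x :: real)"
    using integrable_real_mult_indicator[OF bM ia] by simp
  have e0: "indicator (a \<inter> b) = (\<lambda>x. indicator a x * indicator b x :: real)"
    by (auto split: split_indicator)
  have e1: "AE x in M. real_cond_exp M G (real_cond_exp M Q (\<lambda>x. indicator a x * indicator b x)) x
      = real_cond_exp M G (\<lambda>x. indicator a x * indicator b x) x"
    by (rule G.real_cond_exp_nested_subalg[OF sQ sG iab])
  have e2: "AE x in M. real_cond_exp M Q (\<lambda>x. indicator a x * indicator b x) x
      = indicator a x * real_cond_exp M Q (indicator b) x"
    by (rule Q.real_cond_exp_mult) (auto simp: iab)
  have e3: "AE x in M. indicator a x * real_cond_exp M Q (indicator b) x
      = indicator a x * real_cond_exp M G (indicator b) x"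
    using key[OF b] by auto
  have e4: "AE x in M. real_cond_exp M G (real_cond_exp M Q (\<lambda>x. indicator a x * indicator b x)) x
      = real_cond_exp M G (\<lambda>x. real_cond_exp M G (indicator b) x * indicator a x) x"
    by (rule G.real_cond_exp_cong) (use e2 e3 in \<open>auto simp: mult.commute\<close>)
  have iGb: "integrable M (\<lambda>x. real_cond_exp M G (indicator b) x * indicator a x)"
    by (rule integrable_real_mult_indicator[OF aM G.real_cond_exp_int(1)[OF ib]])
  have e5: "AE x in M. real_cond_exp M G (\<lambda>x. real_cond_exp M G (indicator b) x * indicator a x) x
      = real_cond_exp M G (indicator b) x * real_cond_exp M G (indicator a) x"
    by (rule G.real_cond_exp_mult) (auto simp: iGb)
  show "AE \<omega> in M. real_cond_exp M G (indicator (a \<inter> b)) \<omega> =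
        real_cond_exp M G (indicator a) \<omega> * real_cond_exp M G (indicator b) \<omega>"
    unfolding e0 using e1 e4 e5 by eventually_elim (simp add: mult.commute)
qed


theorem lemma1:
  fixes M :: "'a measure" and J :: nat and x0 :: nat
    and X :: "real \<Rightarrow> 'a \<Rightarrow> nat"
    and mu :: "nat \<Rightarrow> nat \<Rightarrow> real \<Rightarrow> 'a \<Rightarrow> real"
    and P :: "nat \<Rightarrow> nat \<Rightarrow> real \<Rightarrow> real \<Rightarrow> 'a \<Rightarrow> real"
  assumes prob: "prob_space M"
    \<comment> \<open>intensity processes\<close>
    and mu_meas: "\<And>j k t. j \<in> {0..J} \<Longrightarrow> k \<in> {0..J} \<Longrightarrow> k \<noteq> j \<Longrightarrow> t \<ge> 0 \<Longrightarrow>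
          mu j k t \<in> borel_measurable M"
    and mu_nonneg: "\<And>j k t \<omega>. j \<in> {0..J} \<Longrightarrow> k \<in> {0..J} \<Longrightarrow> k \<noteq> j \<Longrightarrow> t \<ge> 0 \<Longrightarrow>
          \<omega> \<in> space M \<Longrightarrow> mu j k t \<omega> \<ge> 0"
    and mu_cont: "\<And>j k \<omega>. j \<in> {0..J} \<Longrightarrow> k \<in> {0..J} \<Longrightarrow> k \<noteq> j \<Longrightarrow>
          \<omega> \<in> space M \<Longrightarrow> continuous_on {0..} (\<lambda>t. mu j k t \<omega>)"
    and mu_int: "\<And>j k t. j \<in> {0..J} \<Longrightarrow> k \<in> {0..J} \<Longrightarrow> k \<noteq> j \<Longrightarrow> t \<ge> 0 \<Longrightarrow>
          integrable M (mu j k t)"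
    \<comment> \<open>the jump process X\<close>
    and x0: "x0 \<in> {0..J}"
    and X_meas: "\<And>t. t \<ge> 0 \<Longrightarrow> X t \<in> measurable M (count_space UNIV)"
    and X_vals: "\<And>t \<omega>. t \<ge> 0 \<Longrightarrow> \<omega> \<in> space M \<Longrightarrow> X t \<omega> \<in> {0..J}"
    and X_init: "\<And>\<omega>. \<omega> \<in> space M \<Longrightarrow> X 0 \<omega> = x0"
    and X_rc: "\<And>t \<omega>. t \<ge> 0 \<Longrightarrow> \<omega> \<in> space M \<Longrightarrow>
          \<exists>e>0. \<forall>s\<in>{t..<t+e}. X s \<omega> = X t \<omega>"
    and X_ll: "\<And>t \<omega>. t > 0 \<Longrightarrow> \<omega> \<in> space M \<Longrightarrow>
          \<exists>e>0. \<exists>c. \<forall>s\<in>{t-e<..<t}. X s \<omega> = c"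
    \<comment> \<open>conditional Markov property given the whole intensity path\<close>
    and markov: "\<And>t. t \<ge> 0 \<Longrightarrow>
          cond_indep M (sig M (genX M X {t<..})) (sig M (genX M X {0..t}))
            (sig M (genX M X {t} \<union> genMu M J mu {0..}))"
    \<comment> \<open>conditional transition probabilities\<close>
    and P_meas: "\<And>j k t T. j \<in> {0..J} \<Longrightarrow> k \<in> {0..J} \<Longrightarrow> 0 \<le> t \<Longrightarrow> t < T \<Longrightarrow>
          P j k t T \<in> borel_measurable (sig M (genMu M J mu {t..T}))"
    and P_trans: "\<And>k t T. k \<in> {0..J} \<Longrightarrow> 0 \<le> t \<Longrightarrow> t < T \<Longrightarrow>
          AE \<omega> in M. real_cond_exp M (sig M (genX M X {0..t} \<union> genMu M J mu {0..}))
              (indicator {\<omega>\<in>space M. X T \<omega> = k}) \<omega> = P (X t \<omega>) k t T \<omega>"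
    and P_lim: "\<And>j k t. j \<in> {0..J} \<Longrightarrow> k \<in> {0..J} \<Longrightarrow> k \<noteq> j \<Longrightarrow> t \<ge> 0 \<Longrightarrow>
          AE \<omega> in M. ((\<lambda>h. P j k t (t + h) \<omega> / h) \<longlongrightarrow> mu j k t \<omega>) (at_right 0)"
    \<comment> \<open>canonical construction: conditional law of (X_s)_{s<=t} given F^mu_infty
        is F^mu_t-measurable\<close>
    and canon: "\<And>t A. t \<ge> 0 \<Longrightarrow> A \<in> sets (sig M (genX M X {0..t})) \<Longrightarrow>
          \<exists>g \<in> borel_measurable (sig M (genMu M J mu {0..t})).
            AE \<omega> in M. real_cond_exp M (sig M (genMu M J mu {0..})) (indicator A) \<omega> = g \<omega>"
  shows "\<forall>t\<ge>0.
     cond_indep M (sig M (genX M X {t<..} \<union> genMu M J mu {t<..})) (sig M (genX M X {0..t}))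
        (sig M (genX M X {t} \<union> genMu M J mu {0..t}))
   \<and> cond_indep M (sig M (genMu M J mu {t<..})) (sig M (genX M X {0..t}))
        (sig M (genMu M J mu {0..t}))"
proof (intro allI impI)
  fix t :: real assume t: "t \<ge> 0"
  interpret prob_space M by fact
  have gX: "genX M X T \<subseteq> sets M" if "T \<subseteq> {0..}" for T
  proof
    fix x assume "x \<in> genX M X T"
    then obtain s B where s: "s \<in> T" and x: "x = X s -` B \<inter> space M" unfolding genX_def by auto
    have "s \<ge> 0" using s that by auto
    then show "x \<in> sets M" unfolding x using measurable_sets[OF X_meas[of s], of B] by auto
  qed
  have gMu: "genMu M J mu T \<subseteq> sets M" if "T \<subseteq> {0..}" for T
  proof
    fix x assume "x \<in> genMu M J mu T"
    then obtain s j k B where s: "s \<in> T" and j: "j \<in> {0..J}" and k: "k \<in> {0..J} - {j}"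
      and B: "B \<in> sets borel" and x: "x = mu j k s -` B \<inter> space M" unfolding genMu_def by blast
    have "s \<ge> 0" using s that by auto
    then show "x \<in> sets M" unfolding x using measurable_sets[OF mu_meas[of j k s] B] j k by auto
  qed
  have mX: "genX M X T1 \<subseteq> genX M X T2" if "T1 \<subseteq> T2" for T1 T2
    using that unfolding genX_def by blast
  have mMu: "genMu M J mu T1 \<subseteq> genMu M J mu T2" if "T1 \<subseteq> T2" for T1 T2
    using that unfolding genMu_def by blast
  define U where "U = genX M X {0..} \<union> genMu M J mu {0..}"
  have U: "U \<subseteq> sets M" unfolding U_def using gX gMu by auto
  have subU: "subalgebra M (sig M E)" if "E \<subseteq> U" for E
    using subalg_sig[of E M] that U by auto
  have X1: "genX M X {0..t} \<subseteq> U" "genX M X {t} \<subseteq> U" "genX M X {t<..} \<subseteq> U"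
    unfolding U_def using mX[of "{0..t}" "{0..}"] mX[of "{t}" "{0..}"] mX[of "{t<..}" "{0..}"] t by (auto simp: subset_eq)
  have M1: "genMu M J mu {0..t} \<subseteq> U" "genMu M J mu {0..} \<subseteq> U" "genMu M J mu {t<..} \<subseteq> U"
    unfolding U_def using mMu[of "{0..t}" "{0..}"] mMu[of "{t<..}" "{0..}"] t by (auto simp: subset_eq)
  define FXt where "FXt = sig M (genX M X {0..t})"
  define Fmut where "Fmut = sig M (genMu M J mu {0..t})"
  define Minf where "Minf = sig M (genMu M J mu {0..})"
  define Fmup where "Fmup = sig M (genMu M J mu {t<..})"
  define Ap where "Ap = sig M (genX M X {t<..} \<union> genMu M J mu {t<..})"
  define G where "G = sig M (genX M X {t} \<union> genMu M J mu {0..t})"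
  define H where "H = sig M (genX M X {t} \<union> genMu M J mu {0..})"
  define FXp where "FXp = sig M (genX M X {t<..})"
  define Q where "Q = sig M (genX M X {t<..} \<union> (genX M X {t} \<union> genMu M J mu {0..}))"
  have sFXt: "subalgebra M FXt" unfolding FXt_def U_def using t by (intro subU) (use X1 M1 in auto)
  have sFmut: "subalgebra M Fmut" unfolding Fmut_def U_def by (intro subU) (use X1 M1 in auto)
  have sMinf: "subalgebra M Minf" unfolding Minf_def by (intro subU) (use M1 in auto)
  have sG: "subalgebra M G" unfolding G_def U_def using t by (intro subU) (use X1 M1 in auto)
  have sH: "subalgebra M H" unfolding H_def U_def using t by (intro subU) (use X1 M1 in auto)
  have sQ: "subalgebra M Q" unfolding Q_def U_def using t by (intro subU) (use X1 M1 in auto)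
  have mu_t: "genMu M J mu {0..t} \<subseteq> genMu M J mu {0..}" and mu_p: "genMu M J mu {t<..} \<subseteq> genMu M J mu {0..}"
    using mMu[of "{0..t}" "{0..}"] mMu[of "{t<..}" "{0..}"] t by (auto simp: subset_eq)
  have gs: "genX M X {t<..} \<subseteq> sets M" "genX M X {t} \<subseteq> sets M" "genMu M J mu {0..} \<subseteq> sets M"
    using gX[of "{t<..}"] gX[of "{t}"] gMu[of "{0..}"] t by (auto simp: subset_eq)
  have sMinf_Fmut: "subalgebra Minf Fmut" unfolding Minf_def Fmut_def
    by (rule subalg_sub) (use gs mu_t mu_p in auto)
  have sMinf_Fmup: "subalgebra Minf Fmup" unfolding Minf_def Fmup_def
    by (rule subalg_sub) (use gs mu_t mu_p in auto)
  have sQ_Ap: "subalgebra Q Ap" unfolding Q_def Ap_def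
    by (rule subalg_sub) (use gs mu_t mu_p in auto)
  have sQ_G: "subalgebra Q G" unfolding Q_def G_def
    by (rule subalg_sub) (use gs mu_t mu_p in auto)
  have sQ_H: "subalgebra Q H" unfolding Q_def H_def
    by (rule subalg_sub) (use gs mu_t mu_p in auto)
  have sH_G: "subalgebra H G" unfolding H_def G_def
    by (rule subalg_sub) (use gs mu_t mu_p in auto)
  have sG_Fmut: "subalgebra G Fmut" unfolding G_def Fmut_def
    by (rule subalg_sub) (use gs mu_t mu_p in auto)
  interpret Mi: sigma_finite_subalgebra M Minf by (rule sfs[OF prob sMinf])
  interpret Ft: sigma_finite_subalgebra M Fmut by (rule sfs[OF prob sFmut])
  interpret Gs: sigma_finite_subalgebra M G by (rule sfs[OF prob sG])
  interpret Hs: sigma_finite_subalgebra M H by (rule sfs[OF prob sH])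
  interpret Qs: sigma_finite_subalgebra M Q by (rule sfs[OF prob sQ])
  have ind_int: "integrable M (indicator b :: _ \<Rightarrow> real)" if "b \<in> sets M" for b
    using that by (simp add: integrable_indicator_iff emeasure_eq_measure)
  have bM: "b \<in> sets M" if "b \<in> sets FXt" for b using that sFXt unfolding subalgebra_def by auto
  have canon': "\<exists>g \<in> borel_measurable Fmut. AE x in M. real_cond_exp M Minf (indicator b) x = g x"
    if "b \<in> sets FXt" for b
    using canon[OF t that[unfolded FXt_def]] unfolding Fmut_def Minf_def .
  have C2: "cond_indep M Fmup FXt Fmut"
  proof (rule L1[OF prob sMinf_Fmup sMinf_Fmut sMinf sFXt])
    fix b assume b: "b \<in> sets FXt"
    obtain g where g: "g \<in> borel_measurable Fmut" and ae: "AE x in M. real_cond_exp M Minf (indicator b) x = g x"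
      using canon'[OF b] by blast
    have ib: "integrable M (indicator b :: _ \<Rightarrow> real)" using ind_int bM b by auto
    have gM: "g \<in> borel_measurable M" by (rule measurable_from_subalg[OF sFmut g])
    have ig: "integrable M g" by (rule integrable_cong_AE_imp[OF Mi.real_cond_exp_int(1)[OF ib] gM ae])
    have e1: "AE x in M. real_cond_exp M Fmut (real_cond_exp M Minf (indicator b)) x = real_cond_exp M Fmut (indicator b) x"
      by (rule Ft.real_cond_exp_nested_subalg[OF sMinf sMinf_Fmut ib])
    have e2: "AE x in M. real_cond_exp M Fmut (real_cond_exp M Minf (indicator b)) x = real_cond_exp M Fmut g x"
      by (rule Ft.real_cond_exp_cong[OF ae]) (auto simp: gM)
    have e3: "AE x in M. real_cond_exp M Fmut g x = g x"
      by (rule Ft.real_cond_exp_F_meas[OF ig g])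
    show "AE x in M. real_cond_exp M Minf (indicator b) x = real_cond_exp M Fmut (indicator b) x"
      using ae e1 e2 e3 by eventually_elim simp
  qed
  have sFXp: "subalgebra M FXp" unfolding FXp_def by (intro subU) (use X1 M1 in auto)
  have mk: "AE x in M. real_cond_exp M H (indicator (a \<inter> b)) x =
        real_cond_exp M H (indicator a) x * real_cond_exp M H (indicator b) x"
    if "a \<in> sets FXp" "b \<in> sets FXt" for a b
    using markov[OF t, folded FXp_def FXt_def H_def] that unfolding cond_indep_def by blast
  have step1: "AE x in M. real_cond_exp M Q (indicator b) x = real_cond_exp M H (indicator b) x"
    if b: "b \<in> sets FXt" for b
  proof -
    have bM': "b \<in> sets M" using bM b by auto
    have ib: "integrable M (indicator b :: _ \<Rightarrow> real)" using ind_int bM' by auto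
    have iE: "integrable M (real_cond_exp M H (indicator b))" by (rule Hs.real_cond_exp_int(1)[OF ib])
    have hQ: "real_cond_exp M H (indicator b) \<in> borel_measurable Q"
      by (rule measurable_from_subalg[OF sQ_H]) simp
    show ?thesis
    proof (rule Qs.real_cond_exp_charact)
      fix c assume c: "c \<in> sets Q"
      define E1 where "E1 = {a \<inter> h | a h. a \<in> sets FXp \<and> h \<in> sets H}"
      have stE1: "Int_stable E1" unfolding Int_stable_def E1_def
      proof (clarify)
        fix a h a' h' assume "a \<in> sets FXp" "h \<in> sets H" "a' \<in> sets FXp" "h' \<in> sets H"
        then show "\<exists>a'' h''. a \<inter> h \<inter> (a' \<inter> h') = a'' \<inter> h'' \<and> a'' \<in> sets FXp \<and> h'' \<in> sets H"
          by (intro exI[of _ "a \<inter> a'"] exI[of _ "h \<inter> h'"]) auto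
      qed
      have E1M: "E1 \<subseteq> sets M" unfolding E1_def using sFXp sH unfolding subalgebra_def by auto
      have "sets Q = sigma_sets (space M) (genX M X {t<..} \<union> (genX M X {t} \<union> genMu M J mu {0..}))"
        unfolding Q_def by (rule sets_sig) (use gs in auto)
      also have "\<dots> \<subseteq> sigma_sets (space M) E1"
      proof (rule sigma_sets_mono')
        show "genX M X {t<..} \<union> (genX M X {t} \<union> genMu M J mu {0..}) \<subseteq> E1"
        proof
          fix x assume x: "x \<in> genX M X {t<..} \<union> (genX M X {t} \<union> genMu M J mu {0..})"
          have xM: "x \<subseteq> space M" using x gs sets.sets_into_space by blast
          show "x \<in> E1"
          proof (cases "x \<in> genX M X {t<..}")
            case True
            have "x \<in> sets FXp" unfolding FXp_def using True gs by (simp add: sets_sig)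
            moreover have "space M \<in> sets H" using sH unfolding subalgebra_def by (metis sets.top)
            ultimately show ?thesis unfolding E1_def using xM by blast
          next
            case False
            then have "x \<in> sets H" unfolding H_def using x gs gX[of "{t}"] t by (subst sets_sig) auto
            moreover have "space M \<in> sets FXp" using sFXp unfolding subalgebra_def by (metis sets.top)
            ultimately show ?thesis unfolding E1_def using xM by blast
          qed
        qed
      qed
      finally have cE1: "c \<in> sigma_sets (space M) E1" using c by auto
      show "(\<integral>x\<in>c. indicator b x \<partial>M) = (\<integral>x\<in>c. real_cond_exp M H (indicator b) x \<partial>M)"
      proof (rule dynkin_int[OF ib iE stE1 E1M _ _ cE1])
        show "(\<integral>x. indicator b x \<partial>M) = (\<integral>x. real_cond_exp M H (indicator b) x \<partial>M)"
          by (rule Hs.real_cond_exp_int(2)[OF ib, symmetric])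
      next
        fix c assume "c \<in> E1"
        then obtain a h where a: "a \<in> sets FXp" and h: "h \<in> sets H" and c: "c = a \<inter> h" unfolding E1_def by blast
        have aM: "a \<in> sets M" and hM: "h \<in> sets M" using a h sFXp sH unfolding subalgebra_def by auto
        have [measurable]: "indicator h \<in> borel_measurable H" using h by simp
        have iab: "integrable M (indicator (a \<inter> b) :: _ \<Rightarrow> real)" using ind_int aM bM' by auto
        have "(\<integral>x\<in>c. indicator b x \<partial>M) = (\<integral>x. indicator h x * indicator (a \<inter> b) x \<partial>M :: real)"
          unfolding set_lebesgue_integral_def c
          by (rule Bochner_Integration.integral_cong) (auto split: split_indicator)
        also have "\<dots> = (\<integral>x. indicator h x * real_cond_exp M H (indicator (a \<inter> b)) x \<partial>M)"
          by (rule Hs.real_cond_exp_intg(2)[symmetric])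
             (use integrable_mult_indicator[OF hM iab] sets.Int[OF aM bM'] in \<open>auto simp: aM bM'\<close>)
        also have "\<dots> = (\<integral>x. (indicator h x * real_cond_exp M H (indicator b) x) * real_cond_exp M H (indicator a) x \<partial>M)"
          by (rule integral_cong_AE) (use mk[OF a b] hM in \<open>auto elim!: eventually_mono\<close>)
        also have "\<dots> = (\<integral>x. (indicator h x * real_cond_exp M H (indicator b) x) * indicator a x \<partial>M)"
        proof (rule Hs.real_cond_exp_intg(2))
          show "integrable M (\<lambda>x. indicator h x * real_cond_exp M H (indicator b) x * indicator a x)"
            by (rule integrable_real_mult_indicator[OF aM])
               (use integrable_mult_indicator[OF hM iE] in simp)
        qed (auto intro: borel_measurable_indicator[OF aM])
        also have "\<dots> = (\<integral>x\<in>c. real_cond_exp M H (indicator b) x \<partial>M)"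
          unfolding set_lebesgue_integral_def c
          by (rule Bochner_Integration.integral_cong) (auto split: split_indicator)
        finally show "(\<integral>x\<in>c. indicator b x \<partial>M) = (\<integral>x\<in>c. real_cond_exp M H (indicator b) x \<partial>M)" .
      qed
    qed (auto simp: ib iE hQ)
  qed
  have step2: "AE x in M. real_cond_exp M H (indicator b) x = real_cond_exp M G (indicator b) x"
    if b: "b \<in> sets FXt" for b
  proof -
    have bM': "b \<in> sets M" using bM b by auto
    have ib: "integrable M (indicator b :: _ \<Rightarrow> real)" using ind_int bM' by auto
    define Xs where "Xs i = X t -` {i} \<inter> space M" for i
    have XsFXt: "Xs i \<in> sets FXt" for i
    proof -
      have "Xs i \<in> genX M X {0..t}" unfolding genX_def
        by (rule UN_I[of t]) (use t in \<open>auto simp: Xs_def\<close>)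
      moreover have "genX M X {0..t} \<subseteq> sets M" using X1 U by auto
      ultimately show ?thesis unfolding FXt_def by (simp add: sets_sig sigma_sets.Basic)
    qed
    have XsG: "Xs i \<in> sets G" for i
    proof -
      have "Xs i \<in> genX M X {t}" unfolding genX_def
        by (rule UN_I[of t]) (auto simp: Xs_def)
      moreover have "genX M X {t} \<union> genMu M J mu {0..t} \<subseteq> sets M" using X1 M1 U by auto
      ultimately show ?thesis unfolding G_def by (simp add: sets_sig sigma_sets.Basic)
    qed
    have XsM: "Xs i \<in> sets M" for i using XsG sG unfolding subalgebra_def by auto
    have bXs: "b \<inter> Xs i \<in> sets FXt" for i using b XsFXt by auto
    have bXsM: "b \<inter> Xs i \<in> sets M" for i using bM' XsM by auto
    have "\<forall>i. \<exists>g. g \<in> borel_measurable Fmut \<and> (AE x in M. real_cond_exp M Minf (indicator (Xs i)) x = g x)"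
      using canon'[OF XsFXt] by blast
    then obtain g where g: "\<And>i. g i \<in> borel_measurable Fmut"
      and gae: "\<And>i. AE x in M. real_cond_exp M Minf (indicator (Xs i)) x = g i x" by metis
    have "\<forall>i. \<exists>g. g \<in> borel_measurable Fmut \<and> (AE x in M. real_cond_exp M Minf (indicator (b \<inter> Xs i)) x = g x)"
      using canon'[OF bXs] by blast
    then obtain gb where gb: "\<And>i. gb i \<in> borel_measurable Fmut"
      and gbae: "\<And>i. AE x in M. real_cond_exp M Minf (indicator (b \<inter> Xs i)) x = gb i x" by metis
    define r where "r i x = max 0 (min 1 (gb i x / g i x))" for i x
    have rF: "r i \<in> borel_measurable Fmut" for i unfolding r_def using g[of i] gb[of i] by measurable
    have rM: "r i \<in> borel_measurable M" for i by (rule measurable_from_subalg[OF sFmut rF])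
    have rMinf: "r i \<in> borel_measurable Minf" for i by (rule measurable_from_subalg[OF sMinf_Fmut rF])
    have rG: "r i \<in> borel_measurable G" for i by (rule measurable_from_subalg[OF sG_Fmut rF])
    have rb: "0 \<le> r i x" "r i x \<le> 1" for i x unfolding r_def by auto
    have ir: "integrable M (r i)" for i
      by (rule integrable_const_bound[where B=1]) (use rb rM in auto)
    have rkey: "AE x in M. r i x * g i x = gb i x" for i
    proof -
      have "AE x in M. real_cond_exp M Minf (indicator (b \<inter> Xs i)) x \<le> real_cond_exp M Minf (indicator (Xs i)) x"
        by (rule Mi.real_cond_exp_mono) (auto simp: ind_int bXsM XsM split: split_indicator)
      moreover have "AE x in M. real_cond_exp M Minf (indicator (b \<inter> Xs i)) x \<ge> 0"
        by (rule Mi.real_cond_exp_pos) (use borel_measurable_indicator[OF bXsM[of i]] in auto)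
      ultimately show ?thesis using gae[of i] gbae[of i]
      proof eventually_elim
        case (elim x)
        then have "0 \<le> gb i x" "gb i x \<le> g i x" by auto
        then show ?case unfolding r_def
          by (cases "g i x = 0") (auto simp: field_simps min_def max_def)
      qed
    qed
    define psi where "psi i x = indicator (Xs i) x * r i x" for i x
    define \<psi> where "\<psi> x = (\<Sum>i\<in>{0..J}. psi i x)" for x
    have ipsi: "integrable M (psi i)" for i
      unfolding psi_def using integrable_mult_indicator[OF XsM ir] by simp
    have [measurable]: "Xs i \<in> sets G" for i by (rule XsG)
    have [measurable]: "r i \<in> borel_measurable G" for i by (rule rG)
    have psiG: "\<psi> \<in> borel_measurable G" unfolding \<psi>_def psi_def by measurable
    have psiH: "\<psi> \<in> borel_measurable H" by (rule measurable_from_subalg[OF sH_G psiG])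
    have ipsi': "integrable M \<psi>" unfolding \<psi>_def using ipsi by auto
    define E2 where "E2 = {X t -` B \<inter> space M \<inter> m | B m. m \<in> sets Minf}"
    have stE2: "Int_stable E2" unfolding Int_stable_def E2_def
    proof (clarify)
      fix B m B' m' assume "m \<in> sets Minf" "m' \<in> sets Minf"
      then show "\<exists>B'' m''. X t -` B \<inter> space M \<inter> m \<inter> (X t -` B' \<inter> space M \<inter> m') = X t -` B'' \<inter> space M \<inter> m'' \<and> m'' \<in> sets Minf"
        by (intro exI[of _ "B \<inter> B'"] exI[of _ "m \<inter> m'"]) auto
    qed
    have XtM: "X t -` B \<inter> space M \<in> sets M" for B using measurable_sets[OF X_meas[OF t], of B] by auto
    have E2M: "E2 \<subseteq> sets M" unfolding E2_def using sMinf XtM unfolding subalgebra_def by auto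
    have HE2: "sets H \<subseteq> sigma_sets (space M) E2"
    proof -
      have "sets H = sigma_sets (space M) (genX M X {t} \<union> genMu M J mu {0..})"
        unfolding H_def by (rule sets_sig) (use gs in auto)
      also have "\<dots> \<subseteq> sigma_sets (space M) E2"
      proof (rule sigma_sets_mono')
        show "genX M X {t} \<union> genMu M J mu {0..} \<subseteq> E2"
        proof
          fix x assume x: "x \<in> genX M X {t} \<union> genMu M J mu {0..}"
          show "x \<in> E2"
          proof (cases "x \<in> genX M X {t}")
            case True
            then obtain B where xB: "x = X t -` B \<inter> space M" unfolding genX_def by auto
            have "space M \<in> sets Minf" using sMinf unfolding subalgebra_def by (metis sets.top)
            then show ?thesis unfolding E2_def xB by blast
          next
            case False
            then have xm: "x \<in> sets Minf" unfolding Minf_def using x gs by (subst sets_sig) auto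
            have "x \<subseteq> space M" using x gs sets.sets_into_space by blast
            then have "x = X t -` UNIV \<inter> space M \<inter> x" by auto
            then show ?thesis unfolding E2_def using xm by blast
          qed
        qed
      qed
      finally show ?thesis .
    qed
    have per_i: "(\<integral>x\<in>c. indicator (b \<inter> Xs i) x \<partial>M) = (\<integral>x\<in>c. psi i x \<partial>M)"
      if c: "c \<in> sets H" for i c
    proof -
      have bas: "(\<integral>x\<in>c. indicator (b \<inter> Xs i) x \<partial>M) = (\<integral>x\<in>c. psi i x \<partial>M)" if "c \<in> E2" for c
      proof -
        obtain B m where m: "m \<in> sets Minf" and c: "c = X t -` B \<inter> space M \<inter> m"
          using \<open>c \<in> E2\<close> unfolding E2_def by blast
        have mM: "m \<in> sets M" using m sMinf unfolding subalgebra_def by auto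
        have [measurable]: "indicator m \<in> borel_measurable Minf" using m by simp
        show ?thesis
        proof (cases "i \<in> B")
          case False
          have "(\<integral>x\<in>c. indicator (b \<inter> Xs i) x \<partial>M) = (\<integral>x. 0 \<partial>M :: real)"
            unfolding set_lebesgue_integral_def c Xs_def
            by (rule Bochner_Integration.integral_cong) (use False in \<open>auto split: split_indicator\<close>)
          also have "\<dots> = (\<integral>x\<in>c. psi i x \<partial>M)"
            unfolding set_lebesgue_integral_def c Xs_def psi_def
            by (rule Bochner_Integration.integral_cong) (use False in \<open>auto split: split_indicator\<close>)
          finally show ?thesis .
        next
          case True
          have "(\<integral>x\<in>c. indicator (b \<inter> Xs i) x \<partial>M) = (\<integral>x. indicator m x * indicator (b \<inter> Xs i) x \<partial>M :: real)"
            unfolding set_lebesgue_integral_def c Xs_def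
            by (rule Bochner_Integration.integral_cong) (use True in \<open>auto split: split_indicator\<close>)
          also have "\<dots> = (\<integral>x. indicator m x * real_cond_exp M Minf (indicator (b \<inter> Xs i)) x \<partial>M)"
            by (rule Mi.real_cond_exp_intg(2)[symmetric])
               (use integrable_mult_indicator[OF mM ind_int[OF bXsM]] bXsM in auto)
          also have "\<dots> = (\<integral>x. (indicator m x * r i x) * g i x \<partial>M)"
          proof (rule integral_cong_AE)
            show "AE x in M. indicator m x * real_cond_exp M Minf (indicator (b \<inter> Xs i)) x = indicator m x * r i x * g i x"
              using gbae[of i] rkey[of i] by eventually_elim simp
          qed (use rM[of i] measurable_from_subalg[OF sFmut g[of i]] mM in auto)
          also have "\<dots> = (\<integral>x. (indicator m x * r i x) * real_cond_exp M Minf (indicator (Xs i)) x \<partial>M)"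
          proof (rule integral_cong_AE)
            show "AE x in M. indicator m x * r i x * g i x = indicator m x * r i x * real_cond_exp M Minf (indicator (Xs i)) x"
              using gae[of i] by eventually_elim simp
          qed (use rM[of i] measurable_from_subalg[OF sFmut g[of i]] mM in auto)
          also have "\<dots> = (\<integral>x. (indicator m x * r i x) * indicator (Xs i) x \<partial>M)"
          proof (rule Mi.real_cond_exp_intg(2))
            show "integrable M (\<lambda>x. indicator m x * r i x * indicator (Xs i) x)"
              by (rule integrable_real_mult_indicator[OF XsM])
                 (use integrable_mult_indicator[OF mM ir] in simp)
          qed (use rMinf XsM in auto)
          also have "\<dots> = (\<integral>x\<in>c. psi i x \<partial>M)"
            unfolding set_lebesgue_integral_def c Xs_def psi_def
            by (rule Bochner_Integration.integral_cong) (use True in \<open>auto split: split_indicator\<close>)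
          finally show ?thesis .
        qed
      qed
      show ?thesis
      proof (rule dynkin_int[OF ind_int[OF bXsM] ipsi stE2 E2M _ bas])
        have sMi: "space M \<in> sets Minf" using sMinf unfolding subalgebra_def by (metis sets.top)
        have "space M = X t -` UNIV \<inter> space M \<inter> space M" by auto
        then have "space M \<in> E2" unfolding E2_def using sMi by blast
        then have "(\<integral>x\<in>space M. indicator (b \<inter> Xs i) x \<partial>M) = (\<integral>x\<in>space M. psi i x \<partial>M)" by (rule bas)
        then show "(\<integral>x. indicator (b \<inter> Xs i) x \<partial>M) = (\<integral>x. psi i x \<partial>M)"
          by (simp add: set_integral_space ind_int[OF bXsM] ipsi)
      qed (use c HE2 in auto)
    qed
    have all_c: "(\<integral>x\<in>c. indicator b x \<partial>M) = (\<integral>x\<in>c. \<psi> x \<partial>M)" if c: "c \<in> sets H" for c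
    proof -
      have cM: "c \<in> sets M" using c sH unfolding subalgebra_def by auto
      have "(\<integral>x\<in>c. indicator b x \<partial>M) = (\<integral>x. (\<Sum>i\<in>{0..J}. indicator c x * indicator (b \<inter> Xs i) x) \<partial>M :: real)"
        unfolding set_lebesgue_integral_def
      proof (rule Bochner_Integration.integral_cong)
        fix x assume x: "x \<in> space M"
        have "(\<Sum>i\<in>{0..J}. indicator c x * indicator (b \<inter> Xs i) x) = (\<Sum>i\<in>{0..J}. if i = X t x then indicator c x * indicator b x else (0::real))"
          using x by (intro sum.cong) (auto simp: Xs_def split: split_indicator)
        also have "\<dots> = indicator c x * indicator b x" using X_vals[OF t x] by simp
        finally show "indicator c x *\<^sub>R (indicator b x :: real) = (\<Sum>i\<in>{0..J}. indicator c x * indicator (b \<inter> Xs i) x :: real)" unfolding real_scaleR_def by (rule sym)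
      qed simp
      also have "\<dots> = (\<Sum>i\<in>{0..J}. (\<integral>x\<in>c. indicator (b \<inter> Xs i) x \<partial>M))"
        unfolding set_lebesgue_integral_def
        by (subst Bochner_Integration.integral_sum) (use integrable_mult_indicator[OF cM ind_int[OF bXsM]] in auto)
      also have "\<dots> = (\<Sum>i\<in>{0..J}. (\<integral>x\<in>c. psi i x \<partial>M))" using per_i[OF c] by simp
      also have "\<dots> = (\<integral>x\<in>c. \<psi> x \<partial>M)"
        unfolding set_lebesgue_integral_def \<psi>_def
        by (subst Bochner_Integration.integral_sum[symmetric])
           (use integrable_mult_indicator[OF cM ipsi] in \<open>auto simp: sum_distrib_left\<close>)
      finally show ?thesis .
    qed
    have h1: "AE x in M. real_cond_exp M H (indicator b) x = \<psi> x"
      by (rule Hs.real_cond_exp_charact[OF all_c ib ipsi' psiH])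
    have h2: "AE x in M. real_cond_exp M G (indicator b) x = \<psi> x"
    proof (rule Gs.real_cond_exp_charact[OF _ ib ipsi' psiG])
      fix c assume "c \<in> sets G"
      then have "c \<in> sets H" using sH_G unfolding subalgebra_def by auto
      then show "(\<integral>x\<in>c. indicator b x \<partial>M) = (\<integral>x\<in>c. \<psi> x \<partial>M)" by (rule all_c)
    qed
    show ?thesis using h1 h2 by eventually_elim simp
  qed
  have C1: "cond_indep M Ap FXt G"
  proof (rule L1[OF prob sQ_Ap sQ_G sQ sFXt])
    fix b assume b: "b \<in> sets FXt"
    show "AE x in M. real_cond_exp M Q (indicator b) x = real_cond_exp M G (indicator b) x"
      using step1[OF b] step2[OF b] by eventually_elim simp
  qed
  show "cond_indep M (sig M (genX M X {t<..} \<union> genMu M J mu {t<..})) (sig M (genX M X {0..t}))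
        (sig M (genX M X {t} \<union> genMu M J mu {0..t}))
   \<and> cond_indep M (sig M (genMu M J mu {t<..})) (sig M (genX M X {0..t}))
        (sig M (genMu M J mu {0..t}))"
    using C1 C2 unfolding Ap_def FXt_def G_def Fmup_def Fmut_def by simp
qed

end
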